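(* Let $\sigma^2>0$ and $a>1$ be constants, let $Z_1,Z_2,\ldots$ be i.i.d. $\mathcal{N}(0,\sigma^2)$, and let $U_0=0$, $U_i=aU_{i-1}+Z_i$ for $i\ge 1$. For $u_1^n=(u_1,\ldots,u_n)$ let $\hat a_{\mathrm{ML}}(u_1^n)=\frac{\sum_{i=1}^{n-1}u_iu_{i+1}}{\sum_{i=1}^{n-1}u_i^2}$, and define $P^+(n,a,\eta)=-\frac1n\log\mathbb{P}[\hat a_{\mathrm{ML}}(U_1^n)-a>\eta]$ and $P^-(n,a,\eta)=-\frac1n\log\mathbb{P}[\hat a_{\mathrm{ML}}(U_1^n)-a<-\eta]$. For $\eta>0$ and $s>0$ define the sequences $\alpha_1=\beta_1=\frac{\sigma^2s^2-2\eta s}{2}$, $\alpha_\ell=\frac{[a^2+2\sigma^2s(a+\eta)]\alpha_{\ell-1}+\alpha_1}{1-2\sigma^2\alpha_{\ell-1}}$ and $\beta_\ell=\frac{[a^2+2\sigma^2s(-a+\eta)]\beta_{\ell-1}+\beta_1}{1-2\sigma^2\beta_{\ell-1}}$ for $\ell\ge2$, and the sets $\mathcal{S}_n^+=\{s>0:\alpha_\ell<\frac{1}{2\sigma^2}\ \forall \ell\in\{1,\ldots,n\}\}$, $\mathcal{S}_n^-=\{s>0:\beta_\ell<\frac{1}{2\sigma^2}\ \forall \ell\in\{1,\ldots,n\}\}$. Then for every constant $\eta>0$ and every $n\ge2$, $$P^+(n,a,\eta)\ge\sup_{s\in\mathcal{S}_n^+}\frac{1}{2n}\sum_{\ell=1}^{n-1}\log(1-2\sigma^2\alpha_\ell),\qquad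 P^-(n,a,\eta)\ge\sup_{s\in\mathcal{S}_n^-}\frac{1}{2n}\sum_{\ell=1}^{n-1}\log(1-2\sigma^2\beta_\ell).$$
   Context: The sequences $\alpha_\ell,\beta_\ell$ depend on the parameters $s$ and $\eta$ (and on the fixed $a,\sigma^2$). Logarithms are natural. *)

theory Defs
  imports "HOL-Probability.Probability"
begin

primrec ar_proc :: "real \<Rightarrow> (nat \<Rightarrow> 'a \<Rightarrow> real) \<Rightarrow> nat \<Rightarrow> 'a \<Rightarrow> real" where
  "ar_proc a Z 0 \<omega> = 0"
| "ar_proc a Z (Suc i) \<omega> = a * ar_proc a Z i \<omega> + Z (Suc i) \<omega>"

definition a_ML :: "(nat \<Rightarrow> real) \<Rightarrow> nat \<Rightarrow> real" where
  "a_ML u n = (\<Sum>i=1..n-1. u i * u (i+1)) / (\<Sum>i=1..n-1. (u i)^2)"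

definition P_plus :: "'a measure \<Rightarrow> (nat \<Rightarrow> 'a \<Rightarrow> real) \<Rightarrow> nat \<Rightarrow> real \<Rightarrow> real \<Rightarrow> real" where
  "P_plus M Z n a \<eta> = - (1 / real n) *
     ln (measure M {\<omega> \<in> space M. a_ML (\<lambda>i. ar_proc a Z i \<omega>) n - a > \<eta>})"

definition P_minus :: "'a measure \<Rightarrow> (nat \<Rightarrow> 'a \<Rightarrow> real) \<Rightarrow> nat \<Rightarrow> real \<Rightarrow> real \<Rightarrow> real" where
  "P_minus M Z n a \<eta> = - (1 / real n) *
     ln (measure M {\<omega> \<in> space M. a_ML (\<lambda>i. ar_proc a Z i \<omega>) n - a < - \<eta>})"

text \<open>Sequences alpha_l, beta_l for l >= 1 (index 0 is unused).
  Parameter s2 is the variance sigma^2.\<close>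
fun alpha_seq :: "real \<Rightarrow> real \<Rightarrow> real \<Rightarrow> real \<Rightarrow> nat \<Rightarrow> real" where
  "alpha_seq a s2 \<eta> s 0 = 0"
| "alpha_seq a s2 \<eta> s (Suc 0) = (s2 * s^2 - 2 * \<eta> * s) / 2"
| "alpha_seq a s2 \<eta> s (Suc (Suc l)) =
     ((a^2 + 2 * s2 * s * (a + \<eta>)) * alpha_seq a s2 \<eta> s (Suc l) + (s2 * s^2 - 2 * \<eta> * s) / 2)
     / (1 - 2 * s2 * alpha_seq a s2 \<eta> s (Suc l))"

fun beta_seq :: "real \<Rightarrow> real \<Rightarrow> real \<Rightarrow> real \<Rightarrow> nat \<Rightarrow> real" where
  "beta_seq a s2 \<eta> s 0 = 0"
| "beta_seq a s2 \<eta> s (Suc 0) = (s2 * s^2 - 2 * \<eta> * s) / 2"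
| "beta_seq a s2 \<eta> s (Suc (Suc l)) =
     ((a^2 + 2 * s2 * s * (- a + \<eta>)) * beta_seq a s2 \<eta> s (Suc l) + (s2 * s^2 - 2 * \<eta> * s) / 2)
     / (1 - 2 * s2 * beta_seq a s2 \<eta> s (Suc l))"

definition S_plus :: "real \<Rightarrow> real \<Rightarrow> real \<Rightarrow> nat \<Rightarrow> real set" where
  "S_plus a s2 \<eta> n = {s. s > 0 \<and> (\<forall>l\<in>{1..n}. alpha_seq a s2 \<eta> s l < 1 / (2 * s2))}"

definition S_minus :: "real \<Rightarrow> real \<Rightarrow> real \<Rightarrow> nat \<Rightarrow> real set" where
  "S_minus a s2 \<eta> n = {s. s > 0 \<and> (\<forall>l\<in>{1..n}. beta_seq a s2 \<eta> s l < 1 / (2 * s2))}"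

end

theory Submission
  imports Defs
begin

lemma nd_int1: "\<sigma> > 0 \<Longrightarrow> (\<integral>\<^sup>+z. ennreal (normal_density \<mu> \<sigma> z) \<partial>lborel) = 1"
  by (subst nn_integral_eq_integral) (auto simp: integrable_normal_density)

lemma gauss_mgf:
  fixes \<sigma> \<beta> \<gamma> :: real
  assumes s: "\<sigma> > 0" and d: "1 - 2*\<sigma>^2*\<gamma> > 0"
  shows "(\<integral>\<^sup>+z. ennreal (normal_density 0 \<sigma> z) * ennreal (exp (\<beta>*z + \<gamma>*z^2)) \<partial>lborel)
     = ennreal (exp (\<beta>^2*\<sigma>^2/(2*(1-2*\<sigma>^2*\<gamma>))) / sqrt (1-2*\<sigma>^2*\<gamma>))"
proof -
  define d where "d = 1 - 2*\<sigma>^2*\<gamma>"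
  have d0: "d > 0" using d by (simp add: d_def)
  define \<sigma>' where "\<sigma>' = \<sigma> / sqrt d"
  define \<mu> where "\<mu> = \<beta>*\<sigma>^2/d"
  define C where "C = exp (\<beta>^2*\<sigma>^2/(2*d)) / sqrt d"
  have C0: "C \<ge> 0" using d0 by (simp add: C_def)
  have sq: "\<sigma>'^2 = \<sigma>^2/d" using d0 by (simp add: \<sigma>'_def power_divide)
  have e: "- ((z - 0)^2)/(2*\<sigma>^2) + (\<beta>*z + \<gamma>*z^2) = \<beta>^2*\<sigma>^2/(2*d) + (- ((z-\<mu>)^2)/(2*\<sigma>'^2))" for z
  proof -
    have g: "\<gamma> = (1-d)/(2*\<sigma>^2)" using s by (simp add: d_def field_simps)
    show ?thesis unfolding sq \<mu>_def g using d0 s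
      by (simp add: field_simps power2_eq_square)
  qed
  have f: "1 / sqrt (2 * pi * \<sigma>\<^sup>2) = (1/sqrt d) * (1 / sqrt (2 * pi * \<sigma>'\<^sup>2))"
    using d0 s unfolding sq by (simp add: real_sqrt_divide real_sqrt_mult field_simps)
  have pt: "normal_density 0 \<sigma> z * exp(\<beta>*z+\<gamma>*z^2) = C * normal_density \<mu> \<sigma>' z" for z
  proof -
    have "normal_density 0 \<sigma> z * exp(\<beta>*z+\<gamma>*z^2) = 1 / sqrt (2 * pi * \<sigma>\<^sup>2) * exp (- ((z - 0)^2)/(2*\<sigma>^2) + (\<beta>*z + \<gamma>*z^2))"
      by (simp add: normal_density_def mult_exp_exp algebra_simps)
    also have "\<dots> = C * normal_density \<mu> \<sigma>' z"
      unfolding e f normal_density_def C_def exp_add by simp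
    finally show ?thesis .
  qed
  have "(\<integral>\<^sup>+z. ennreal (normal_density 0 \<sigma> z) * ennreal (exp (\<beta>*z + \<gamma>*z^2)) \<partial>lborel)
      = (\<integral>\<^sup>+z. ennreal C * ennreal (normal_density \<mu> \<sigma>' z) \<partial>lborel)"
    by (intro nn_integral_cong) (simp add: ennreal_mult[symmetric] pt C0)
  also have "\<dots> = ennreal C"
    by (subst nn_integral_cmult) (auto simp: nd_int1 \<sigma>'_def s d0)
  finally show ?thesis unfolding C_def d_def .
qed

primrec Uv :: "real \<Rightarrow> (nat \<Rightarrow> real) \<Rightarrow> nat \<Rightarrow> real" where
  "Uv a x 0 = 0"
| "Uv a x (Suc i) = a * Uv a x i + x (Suc i)"

lemma ar_Uv: "ar_proc a Z i \<omega> = Uv a (\<lambda>j. Z j \<omega>) i"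
  by (induct i) auto

lemma Uv_dep: "(\<And>j. j \<in> {1..i} \<Longrightarrow> x j = y j) \<Longrightarrow> Uv a x i = Uv a y i"
  by (induct i) auto

definition Sv :: "real \<Rightarrow> real \<Rightarrow> real \<Rightarrow> real \<Rightarrow> (nat \<Rightarrow> real) \<Rightarrow> nat \<Rightarrow> real" where
  "Sv a c \<eta> s x k = (\<Sum>i=1..k-1. s * (c * Uv a x i * x (i+1) - \<eta> * (Uv a x i)^2))"

lemma Sv_dep:
  assumes "\<And>j. j \<in> {1..k} \<Longrightarrow> x j = y j"
  shows "Sv a c \<eta> s x k = Sv a c \<eta> s y k"
  unfolding Sv_def
proof (rule sum.cong[OF refl])
  fix i assume i: "i \<in> {1..k-1}"
  have "Uv a x i = Uv a y i" using i assms by (intro Uv_dep) auto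
  moreover have "x (i+1) = y (i+1)" using i assms by auto
  ultimately show "s * (c * Uv a x i * x (i+1) - \<eta> * (Uv a x i)^2) = s * (c * Uv a y i * y (i+1) - \<eta> * (Uv a y i)^2)"
    by simp
qed

lemma Sv_0: "Sv a c \<eta> s x 0 = 0"
  by (simp add: Sv_def)

lemma Sv_Suc: "Sv a c \<eta> s x (Suc k) = Sv a c \<eta> s x k + s * (c * Uv a x k * x (Suc k) - \<eta> * (Uv a x k)^2)"
proof (cases k)
  case 0 then show ?thesis by (simp add: Sv_def)
next
  case (Suc m)
  then show ?thesis by (simp add: Sv_def)
qed

lemma Uv_meas: "i \<le> k \<Longrightarrow> (\<lambda>v. Uv a v i) \<in> borel_measurable (PiM {1..k} (\<lambda>_. borel))"
proof (induct i)
  case 0 then show ?case by simp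
next
  case (Suc i)
  have "(\<lambda>v. v (Suc i)) \<in> borel_measurable (PiM {1..k} (\<lambda>_. borel))"
    using Suc by (intro measurable_component_singleton) auto
  with Suc show ?case by simp
qed

lemma Uv_meas_k[measurable]: "(\<lambda>v. Uv a v k) \<in> borel_measurable (PiM {1..k} (\<lambda>_. borel))"
  by (rule Uv_meas) simp

lemma Sv_meas[measurable]: "(\<lambda>v. Sv a c \<eta> s v k) \<in> borel_measurable (PiM {1..k} (\<lambda>_. borel))"
  unfolding Sv_def
proof (rule borel_measurable_sum)
  fix i assume i: "i \<in> {1..k-1}"
  have [measurable]: "(\<lambda>v. Uv a v i) \<in> borel_measurable (PiM {1..k} (\<lambda>_. borel))"
    using i by (intro Uv_meas) auto
  have [measurable]: "(\<lambda>v. v (i+1)) \<in> borel_measurable (PiM {1..k} (\<lambda>_. borel))"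
    using i by (intro measurable_component_singleton) auto
  show "(\<lambda>v. s * (c * Uv a v i * v (i+1) - \<eta> * (Uv a v i)^2)) \<in> borel_measurable (PiM {1..k} (\<lambda>_. borel))"
    by measurable
qed



definition Tf :: "real \<Rightarrow> real \<Rightarrow> real \<Rightarrow> nat \<Rightarrow> (nat \<Rightarrow> real) \<Rightarrow> real" where
  "Tf a c \<eta> n x = (\<Sum>i=1..n-1. c * Uv a x i * x (i+1) - \<eta> * (Uv a x i)^2)"

lemma Sv_Tf: "Sv a c \<eta> s x n = s * Tf a c \<eta> n x"
  by (simp add: Sv_def Tf_def sum_distrib_left)

lemma N_eq: "(\<Sum>i=1..n-1. Uv a x i * Uv a x (i+1)) = a * (\<Sum>i=1..n-1. (Uv a x i)^2) + (\<Sum>i=1..n-1. Uv a x i * x (i+1))"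
  by (simp add: sum.distrib sum_distrib_left algebra_simps power2_eq_square)

lemma T_eq: "Tf a c \<eta> n x = c * ((\<Sum>i=1..n-1. Uv a x i * Uv a x (i+1)) - a * (\<Sum>i=1..n-1. (Uv a x i)^2)) - \<eta> * (\<Sum>i=1..n-1. (Uv a x i)^2)"
  unfolding N_eq Tf_def by (simp add: sum.distrib sum_distrib_left sum_subtractf algebra_simps)

lemma D_zero:
  assumes "(\<Sum>i=1..n-1. (Uv a x i)^2) = 0"
  shows "Tf a c \<eta> n x = 0" "(\<Sum>i=1..n-1. Uv a x i * Uv a x (i+1)) = 0"
proof -
  have z: "\<forall>i\<in>{1..n-1}. (Uv a x i)^2 = 0"
    using assms by (subst sum_nonneg_eq_0_iff[symmetric]) auto
  then show "Tf a c \<eta> n x = 0" unfolding Tf_def by (intro sum.neutral) auto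
  show "(\<Sum>i=1..n-1. Uv a x i * Uv a x (i+1)) = 0" using z by (intro sum.neutral) auto
qed

lemma D_nonneg: "(\<Sum>i=1..n-1. (Uv a x i)^2) \<ge> 0"
  by (intro sum_nonneg) auto

lemma ev_plus_T:
  assumes a: "a > 1" and e: "\<eta> > 0" and h: "a_ML (Uv a x) n - a > \<eta>"
  shows "Tf a 1 \<eta> n x \<ge> 0"
proof -
  define D where "D = (\<Sum>i=1..n-1. (Uv a x i)^2)"
  define N where "N = (\<Sum>i=1..n-1. Uv a x i * Uv a x (i+1))"
  have "D \<noteq> 0" proof
    assume "D = 0" then have "a_ML (Uv a x) n = 0" by (simp add: a_ML_def D_def)
    with h a e show False by simp
  qed
  then have D0: "D > 0" using D_nonneg[where n=n and a=a and x=x] by (simp add: D_def)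
  have "N / D > a + \<eta>" using h by (simp add: a_ML_def N_def D_def)
  then have "N > (a+\<eta>) * D" using D0 by (simp add: field_simps)
  then show ?thesis unfolding T_eq N_def[symmetric] D_def[symmetric] by (simp add: algebra_simps)
qed

lemma ev_minus_T:
  assumes a: "a > 1" and e: "\<eta> > 0" and h: "a_ML (Uv a x) n - a < - \<eta>"
  shows "Tf a (-1) \<eta> n x \<ge> 0"
proof -
  define D where "D = (\<Sum>i=1..n-1. (Uv a x i)^2)"
  define N where "N = (\<Sum>i=1..n-1. Uv a x i * Uv a x (i+1))"
  show ?thesis
  proof (cases "D = 0")
    case True then show ?thesis using D_zero[where n=n and a=a and x=x] by (simp add: D_def)
  next
    case False
    then have D0: "D > 0" using D_nonneg[where n=n and a=a and x=x] by (simp add: D_def)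
    have "N / D < a - \<eta>" using h by (simp add: a_ML_def N_def D_def)
    then have "N < (a-\<eta>) * D" using D0 by (simp add: field_simps)
    then show ?thesis unfolding T_eq N_def[symmetric] D_def[symmetric] by (simp add: algebra_simps)
  qed
qed

lemma T_ev_plus:
  assumes h: "Tf a 1 \<eta> n x > 0"
  shows "a_ML (Uv a x) n - a > \<eta>"
proof -
  define D where "D = (\<Sum>i=1..n-1. (Uv a x i)^2)"
  define N where "N = (\<Sum>i=1..n-1. Uv a x i * Uv a x (i+1))"
  have "D \<noteq> 0" using D_zero(1)[where n=n and a=a and x=x and c=1 and \<eta>=\<eta>] h by (auto simp: D_def)
  then have D0: "D > 0" using D_nonneg[where n=n and a=a and x=x] by (simp add: D_def)
  have "N > (a+\<eta>) * D" using h unfolding T_eq N_def[symmetric] D_def[symmetric] by (simp add: algebra_simps)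
  then have "N / D > a + \<eta>" using D0 by (simp add: field_simps)
  then show ?thesis by (simp add: a_ML_def N_def D_def)
qed

lemma T_ev_minus:
  assumes h: "Tf a (-1) \<eta> n x > 0"
  shows "a_ML (Uv a x) n - a < - \<eta>"
proof -
  define D where "D = (\<Sum>i=1..n-1. (Uv a x i)^2)"
  define N where "N = (\<Sum>i=1..n-1. Uv a x i * Uv a x (i+1))"
  have "D \<noteq> 0" using D_zero(1)[where n=n and a=a and x=x and c="-1" and \<eta>=\<eta>] h by (auto simp: D_def)
  then have D0: "D > 0" using D_nonneg[where n=n and a=a and x=x] by (simp add: D_def)
  have "N < (a-\<eta>) * D" using h unfolding T_eq N_def[symmetric] D_def[symmetric] by (simp add: algebra_simps)
  then have "N / D < a - \<eta>" using D0 by (simp add: field_simps)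
  then show ?thesis by (simp add: a_ML_def N_def D_def)
qed

primrec Mb :: "real \<Rightarrow> real \<Rightarrow> nat \<Rightarrow> real" where
  "Mb a K 0 = 0"
| "Mb a K (Suc i) = (a + K) * Mb a K i + 1"

lemma Mb_nonneg: "a \<ge> 0 \<Longrightarrow> K \<ge> 0 \<Longrightarrow> Mb a K i \<ge> 0"
  by (induct i) auto

lemma cpow: "c^2 = (1::real) \<Longrightarrow> c^m = 1 \<or> c^m = -1"
proof -
  assume "c^2 = 1"
  then have "c = 1 \<or> c = -1" by (metis power2_eq_1_iff)
  then show ?thesis
  proof
    assume "c = -1" then show ?thesis by (cases "even m") auto
  qed simp
qed

lemma box_bounds:
  fixes c a \<eta> :: real
  assumes c2: "c^2 = 1" and a: "a > 1" and e: "\<eta> > 0"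
    and hx: "\<And>j. j \<in> {1..n} \<Longrightarrow> (a+\<eta>)*Mb a (a+\<eta>) (j-1) < c^(j+1) * x j \<and> c^(j+1) * x j < (a+\<eta>)*Mb a (a+\<eta>) (j-1) + 1"
  shows "i \<le> n \<Longrightarrow> 0 \<le> c^(i+1) * Uv a x i \<and> c^(i+1) * Uv a x i \<le> Mb a (a+\<eta>) i \<and> (i \<ge> 1 \<longrightarrow> 0 < c^(i+1) * Uv a x i)"
proof (induct i)
  case 0 then show ?case by simp
next
  case (Suc i)
  define K where "K = a + \<eta>"
  define V where "V = c^(i+1) * Uv a x i"
  define W where "W = c^(Suc i+1) * x (Suc i)"
  have IH: "0 \<le> V" "V \<le> Mb a K i" using Suc by (auto simp: V_def K_def)
  have Wb: "K * Mb a K i < W" "W < K * Mb a K i + 1" using hx[of "Suc i"] Suc.prems by (auto simp: W_def K_def)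
  have Mb0: "Mb a K i \<ge> 0" using a e by (intro Mb_nonneg) (auto simp: K_def)
  have eq: "c^(Suc i + 1) * Uv a x (Suc i) = c * a * V + W"
    by (simp add: V_def W_def algebra_simps)
  have cc: "c = 1 \<or> c = -1" using c2 by (metis power2_eq_1_iff)
  have b1: "- (a * V) \<le> c * a * V" "c * a * V \<le> a * Mb a K i"
    using cc IH a by (auto intro: mult_left_mono)
  have "a * V \<le> a * Mb a K i" using IH a by (intro mult_left_mono) auto
  then have lo: "0 < c * a * V + W" using b1 Wb e Mb0 by (simp add: K_def algebra_simps) (smt (verit, ccfv_SIG) mult_nonneg_nonneg)
  have hi: "c * a * V + W \<le> Mb a K (Suc i)" using b1 Wb by (simp add: K_def algebra_simps)
  show ?case using lo hi eq by (simp add: K_def)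
qed

lemma box_T:
  fixes c a \<eta> :: real
  assumes c2: "c^2 = 1" and a: "a > 1" and e: "\<eta> > 0" and n: "n \<ge> 2"
    and hx: "\<And>j. j \<in> {1..n} \<Longrightarrow> (a+\<eta>)*Mb a (a+\<eta>) (j-1) < c^(j+1) * x j \<and> c^(j+1) * x j < (a+\<eta>)*Mb a (a+\<eta>) (j-1) + 1"
  shows "Tf a c \<eta> n x > 0"
  unfolding Tf_def
proof (rule sum_pos)
  show "finite {1..n-1}" by simp
  show "{1..n-1} \<noteq> {}" using n by simp
  fix i assume i: "i \<in> {1..n-1}"
  define K where "K = a + \<eta>"
  define e where "e = c^(i+1)"
  define V where "V = e * Uv a x i"
  define W where "W = c * e * x (Suc i)"
  have ee: "e * e = 1" using c2 by (simp add: e_def power_mult_distrib[symmetric] power2_eq_square[symmetric] power_even_eq[symmetric] power_mult[symmetric]) (metis c2 power_mult power_mult_distrib power_one mult.commute power2_eq_square)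
  have Vb: "0 < V" "V \<le> Mb a K i" using box_bounds[where n=n and x=x and i=i, OF c2 a e hx] i by (auto simp: V_def e_def K_def)
  have Wb: "K * Mb a K i < W" using hx[of "Suc i"] i by (auto simp: W_def e_def K_def algebra_simps)
  have "\<eta> * V \<le> K * Mb a K i" proof -
    have "\<eta> * V \<le> \<eta> * Mb a K i" using Vb e by (intro mult_left_mono) auto
    also have "\<dots> \<le> K * Mb a K i" using Mb_nonneg[of a K i] a e by (intro mult_right_mono) (auto simp: K_def)
    finally show ?thesis .
  qed
  then have pos: "0 < V * (W - \<eta> * V)" using Vb Wb by (intro mult_pos_pos) auto
  have "V * (W - \<eta> * V) = (e*e) * (c * Uv a x i * x (i+1) - \<eta> * (Uv a x i)^2)"
    by (simp add: V_def W_def algebra_simps power2_eq_square)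
  with pos ee show "0 < c * Uv a x i * x (i+1) - \<eta> * (Uv a x i)^2" by simp
qed

locale arset = prob_space M for M :: "'a measure" +
  fixes Z :: "nat \<Rightarrow> 'a \<Rightarrow> real" and s2 a \<eta> :: real
  assumes s2: "s2 > 0" and ind: "indep_vars (\<lambda>_. borel) Z {1..}"
    and dist: "\<And>i. i \<ge> 1 \<Longrightarrow> distributed M lborel (Z i) (normal_density 0 (sqrt s2))"
begin

lemma Zm: "i \<ge> 1 \<Longrightarrow> Z i \<in> borel_measurable M"
  using ind by (auto simp: indep_vars_def)

definition G :: "real \<Rightarrow> real \<Rightarrow> nat \<Rightarrow> real \<Rightarrow> ennreal" where
  "G c s k \<gamma> = (\<integral>\<^sup>+\<omega>. ennreal (exp (Sv a c \<eta> s (\<lambda>j. Z j \<omega>) k + \<gamma> * (Uv a (\<lambda>j. Z j \<omega>) k)^2)) \<partial>M)"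

definition psi :: "real \<Rightarrow> real \<Rightarrow> real \<Rightarrow> real" where
  "psi c s \<gamma> = ((a^2 + 2 * s2 * s * (c * a + \<eta>)) * \<gamma> + (s2 * s^2 - 2 * \<eta> * s) / 2) / (1 - 2 * s2 * \<gamma>)"

lemma G0: "G c s 0 \<gamma> = 1"
  by (simp add: G_def Sv_0 emeasure_space_1)

lemma Gstep:
  assumes c2: "c^2 = 1" and d: "1 - 2* s2*\<gamma> > 0"
  shows "G c s (Suc k) \<gamma> = ennreal (1/sqrt(1-2* s2*\<gamma>)) * G c s k (psi c s \<gamma>)"
proof -
  define A where "A = {1..k}"
  define SA where "SA = PiM A (\<lambda>_::nat. (borel :: real measure))"
  define W where "W \<omega> = restrict (\<lambda>i. Z i \<omega>) A" for \<omega>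
  define Z' where "Z' = Z (Suc k)"
  define d where "d = 1 - 2* s2*\<gamma>"
  have d0: "d > 0" using d by (simp add: d_def)
  have ind1: "indep_var SA W (PiM {Suc k} (\<lambda>_. borel)) (\<lambda>\<omega>. restrict (\<lambda>i. Z i \<omega>) {Suc k})"
    unfolding SA_def W_def[abs_def] A_def
    by (rule indep_var_restrict[OF ind]) auto
  define SB where "SB = PiM {Suc k} (\<lambda>_::nat. (borel :: real measure))"
  define R where "R \<omega> = restrict (\<lambda>i. Z i \<omega>) {Suc k}" for \<omega>
  have indW: "indep_var SA W SB R"
    using ind1 unfolding SB_def R_def[abs_def] .
  note deq = indep_var_distribution_eq[THEN iffD1, OF indW]
  have Wm[measurable]: "W \<in> measurable M SA" and Rm[measurable]: "R \<in> measurable M SB"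
    using deq by auto
  have Z'm[measurable]: "Z' \<in> borel_measurable M" unfolding Z'_def by (rule Zm) simp
  have RZ: "R \<omega> (Suc k) = Z' \<omega>" for \<omega> by (simp add: R_def Z'_def)
  interpret DZ: prob_space "distr M SB R" by (rule prob_space_distr) simp
  define h' where "h' p = ennreal (exp (Sv a c \<eta> s (fst p) k + s * (c*Uv a (fst p) k * snd p - \<eta>*(Uv a (fst p) k)^2) + \<gamma>*(a*Uv a (fst p) k + snd p)^2))" for p
  define h where "h p = h' (fst p, snd p (Suc k))" for p
  have hm[measurable]: "h \<in> borel_measurable (SA \<Otimes>\<^sub>M SB)"
    unfolding h_def h'_def SA_def A_def SB_def by measurable
  have hm': "(\<lambda>z. h' (v, z)) \<in> borel_measurable borel" for v
    unfolding h'_def fst_conv snd_conv by measurable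
  have WZ: "W \<omega> j = Z j \<omega>" if "j \<in> {1..k}" for j \<omega> using that by (simp add: W_def A_def)
  have "G c s (Suc k) \<gamma> = (\<integral>\<^sup>+\<omega>. h (W \<omega>, R \<omega>) \<partial>M)"
    unfolding G_def
  proof (intro nn_integral_cong)
    fix \<omega>
    have "Sv a c \<eta> s (W \<omega>) k = Sv a c \<eta> s (\<lambda>j. Z j \<omega>) k" by (intro Sv_dep WZ)
    moreover have "Uv a (W \<omega>) k = Uv a (\<lambda>j. Z j \<omega>) k" by (intro Uv_dep WZ)
    ultimately show "ennreal (exp (Sv a c \<eta> s (\<lambda>j. Z j \<omega>) (Suc k) + \<gamma> * (Uv a (\<lambda>j. Z j \<omega>) (Suc k))^2)) = h (W \<omega>, R \<omega>)"
      by (simp add: h_def h'_def Sv_Suc RZ Z'_def)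
  qed
  also have "\<dots> = (\<integral>\<^sup>+p. h p \<partial>distr M (SA \<Otimes>\<^sub>M SB) (\<lambda>\<omega>. (W \<omega>, R \<omega>)))"
    by (subst nn_integral_distr) auto
  also have "\<dots> = (\<integral>\<^sup>+p. h p \<partial>(distr M SA W \<Otimes>\<^sub>M distr M SB R))"
    using deq by simp
  also have "\<dots> = (\<integral>\<^sup>+v. (\<integral>\<^sup>+z. h (v,z) \<partial>distr M SB R) \<partial>distr M SA W)"
    by (rule DZ.nn_integral_fst[symmetric]) simp
  also have "\<dots> = (\<integral>\<^sup>+v. ennreal (1/sqrt d) * ennreal (exp (Sv a c \<eta> s v k + psi c s \<gamma> * (Uv a v k)^2)) \<partial>distr M SA W)"
  proof (intro nn_integral_cong)
    fix v
    define U where "U = Uv a v k"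
    define B where "B = Sv a c \<eta> s v k - s*\<eta>*U^2 + \<gamma>*a^2*U^2"
    define \<beta> where "\<beta> = (c* s + 2*\<gamma>*a)*U"
    have hv: "h' (v,z) = ennreal (exp B) * ennreal (exp (\<beta>*z + \<gamma>*z^2))" for z
      by (simp add: h'_def B_def \<beta>_def U_def ennreal_mult[symmetric] mult_exp_exp power2_eq_square algebra_simps)
    have ss: "(sqrt s2)^2 = s2" using s2 by simp
    have "(\<integral>\<^sup>+z. h (v,z) \<partial>distr M SB R) = (\<integral>\<^sup>+\<omega>. h' (v, Z' \<omega>) \<partial>M)"
    proof -
      have "(\<lambda>z. h' (v, z (Suc k))) \<in> borel_measurable SB"
      proof -
        have c1: "(\<lambda>z. z (Suc k)) \<in> measurable SB borel"
          unfolding SB_def by (rule measurable_component_singleton) simp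
        show ?thesis by (rule measurable_compose[OF c1 hm'[of v]])
      qed
      then show ?thesis by (subst nn_integral_distr) (auto simp: h_def RZ)
    qed
    also have "\<dots> = (\<integral>\<^sup>+z. ennreal (normal_density 0 (sqrt s2) z) * h' (v,z) \<partial>lborel)"
      by (rule distributed_nn_integral[symmetric]) (auto simp: Z'_def intro: dist hm')
    also have "\<dots> = (\<integral>\<^sup>+z. ennreal (exp B) * (ennreal (normal_density 0 (sqrt s2) z) * ennreal (exp (\<beta>*z + \<gamma>*z^2))) \<partial>lborel)"
      by (simp add: hv mult_ac)
    also have "\<dots> = ennreal (exp B) * (\<integral>\<^sup>+z. ennreal (normal_density 0 (sqrt s2) z) * ennreal (exp (\<beta>*z + \<gamma>*z^2)) \<partial>lborel)"
      by (rule nn_integral_cmult) simp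
    also have "\<dots> = ennreal (exp B) * ennreal (exp (\<beta>^2* s2/(2*d)) / sqrt d)"
      using gauss_mgf[of "sqrt s2" \<gamma> \<beta>] s2 d0 by (simp add: ss d_def)
    also have "\<dots> = ennreal (1/sqrt d) * ennreal (exp (Sv a c \<eta> s v k + psi c s \<gamma> * (Uv a v k)^2))"
    proof -
      have "B + \<beta>^2* s2/(2*d) = Sv a c \<eta> s v k + psi c s \<gamma> * U^2"
      proof -
        have cc: "c*c = 1" using c2 by (simp add: power2_eq_square)
        have "\<beta>^2 = (s^2 + 4*c*\<gamma>*a* s + 4*\<gamma>^2*a^2)*U^2"
          unfolding \<beta>_def by (simp add: power2_eq_square algebra_simps cc)
        then show ?thesis unfolding B_def psi_def d_def using d0[unfolded d_def]
          by (simp add: field_simps power2_eq_square)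
      qed
      then have "exp B * exp (\<beta>^2* s2/(2*d)) = exp (Sv a c \<eta> s v k + psi c s \<gamma> * (Uv a v k)^2)"
        by (metis U_def mult_exp_exp)
      then have "exp B * (exp (\<beta>^2* s2/(2*d)) / sqrt d) = (1/sqrt d) * exp (Sv a c \<eta> s v k + psi c s \<gamma> * (Uv a v k)^2)"
        by (metis (no_types, lifting) divide_inverse mult.assoc mult.commute mult_1)
      then have "ennreal (exp B * (exp (\<beta>^2* s2/(2*d)) / sqrt d)) = ennreal ((1/sqrt d) * exp (Sv a c \<eta> s v k + psi c s \<gamma> * (Uv a v k)^2))"
        by (rule arg_cong[where f=ennreal])
      moreover have "ennreal (exp B) * ennreal (exp (\<beta>^2* s2/(2*d)) / sqrt d) = ennreal (exp B * (exp (\<beta>^2* s2/(2*d)) / sqrt d))"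
        using d0 by (intro ennreal_mult[symmetric]) auto
      moreover have "ennreal (1/sqrt d) * ennreal (exp (Sv a c \<eta> s v k + psi c s \<gamma> * (Uv a v k)^2)) = ennreal ((1/sqrt d) * exp (Sv a c \<eta> s v k + psi c s \<gamma> * (Uv a v k)^2))"
        using d0 by (intro ennreal_mult[symmetric]) auto
      ultimately show ?thesis by simp
    qed
    finally show "(\<integral>\<^sup>+z. h (v,z) \<partial>distr M SB R) = ennreal (1/sqrt d) * ennreal (exp (Sv a c \<eta> s v k + psi c s \<gamma> * (Uv a v k)^2))" .
  qed
  also have "\<dots> = (\<integral>\<^sup>+\<omega>. ennreal (1/sqrt d) * ennreal (exp (Sv a c \<eta> s (W \<omega>) k + psi c s \<gamma> * (Uv a (W \<omega>) k)^2)) \<partial>M)"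
  proof -
    have gm: "(\<lambda>v. ennreal (1/sqrt d) * ennreal (exp (Sv a c \<eta> s v k + psi c s \<gamma> * (Uv a v k)^2))) \<in> borel_measurable SA"
      unfolding SA_def A_def by measurable
    show ?thesis using gm by (subst nn_integral_distr[OF Wm]) simp_all
  qed
  also have "\<dots> = ennreal (1/sqrt d) * (\<integral>\<^sup>+\<omega>. ennreal (exp (Sv a c \<eta> s (W \<omega>) k + psi c s \<gamma> * (Uv a (W \<omega>) k)^2)) \<partial>M)"
  proof -
    have gm: "(\<lambda>v. ennreal (exp (Sv a c \<eta> s v k + psi c s \<gamma> * (Uv a v k)^2))) \<in> borel_measurable SA"
      unfolding SA_def A_def by measurable
    show ?thesis by (rule nn_integral_cmult) (rule measurable_compose[OF Wm gm])
  qed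
  also have "(\<integral>\<^sup>+\<omega>. ennreal (exp (Sv a c \<eta> s (W \<omega>) k + psi c s \<gamma> * (Uv a (W \<omega>) k)^2)) \<partial>M) = G c s k (psi c s \<gamma>)"
    unfolding G_def
  proof (intro nn_integral_cong)
    fix \<omega>
    have "Sv a c \<eta> s (W \<omega>) k = Sv a c \<eta> s (\<lambda>j. Z j \<omega>) k" by (intro Sv_dep WZ)
    moreover have "Uv a (W \<omega>) k = Uv a (\<lambda>j. Z j \<omega>) k" by (intro Uv_dep WZ)
    ultimately show "ennreal (exp (Sv a c \<eta> s (W \<omega>) k + psi c s \<gamma> * (Uv a (W \<omega>) k)^2)) = ennreal (exp (Sv a c \<eta> s (\<lambda>j. Z j \<omega>) k + psi c s \<gamma> * (Uv a (\<lambda>j. Z j \<omega>) k)^2))"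
      by simp
  qed
  finally show ?thesis by (simp add: d_def)
qed


lemma Gprod:
  assumes c2: "c^2 = 1" and qS: "\<And>j. q (Suc j) = psi c s (q j)"
  shows "(\<forall>l\<in>{j..<j+k}. q l < 1/(2* s2)) \<Longrightarrow> G c s k (q j) = (\<Prod>l\<in>{j..<j+k}. ennreal (1/sqrt(1-2* s2*q l)))"
proof (induct k arbitrary: j)
  case 0 show ?case by (simp add: G0)
next
  case (Suc k)
  have "q j < 1/(2* s2)" using Suc.prems by auto
  then have qj: "1 - 2* s2*q j > 0" using s2 by (simp add: field_simps)
  have "G c s (Suc k) (q j) = ennreal (1/sqrt(1-2* s2*q j)) * G c s k (q (Suc j))"
    using Gstep[OF c2 qj] qS by simp
  also have "G c s k (q (Suc j)) = (\<Prod>l\<in>{Suc j..<Suc j+k}. ennreal (1/sqrt(1-2* s2*q l)))"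
    using Suc.prems by (intro Suc.hyps) auto
  also have "ennreal (1/sqrt(1-2* s2*q j)) * (\<Prod>l\<in>{Suc j..<Suc j+k}. ennreal (1/sqrt(1-2* s2*q l)))
      = (\<Prod>l\<in>{j..<j+Suc k}. ennreal (1/sqrt(1-2* s2*q l)))"
    by (subst prod.atLeast_Suc_lessThan[of j "j + Suc k"]) auto
  finally show ?case .
qed

lemma prob_Ioo_pos:
  assumes i: "i \<ge> 1" and lr: "l < r"
  shows "prob (Z i -` {l<..<r} \<inter> space M) > 0"
proof -
  have em: "emeasure M (Z i -` {l<..<r} \<inter> space M) = (\<integral>\<^sup>+x. ennreal (normal_density 0 (sqrt s2) x) * indicator {l<..<r} x \<partial>lborel)"
    by (rule distributed_emeasure[OF dist[OF i]]) simp
  have "emeasure M (Z i -` {l<..<r} \<inter> space M) \<noteq> 0"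
  proof
    assume "emeasure M (Z i -` {l<..<r} \<inter> space M) = 0"
    then have "(\<integral>\<^sup>+x. ennreal (normal_density 0 (sqrt s2) x) * indicator {l<..<r} x \<partial>lborel) = 0" using em by simp
    then have "AE x in lborel. ennreal (normal_density 0 (sqrt s2) x) * indicator {l<..<r} x = 0"
      by (subst (asm) nn_integral_0_iff_AE) auto
    moreover have "ennreal (normal_density 0 (sqrt s2) x) * indicator {l<..<r} x = 0 \<Longrightarrow> x \<notin> {l<..<r}" for x
    proof
      assume h: "ennreal (normal_density 0 (sqrt s2) x) * indicator {l<..<r} x = 0" and x: "x \<in> {l<..<r}"
      have "normal_density 0 (sqrt s2) x > 0" using s2 by (simp add: normal_density_pos)
      with h x show False by simp
    qed
    ultimately have "AE x in lborel. x \<notin> {l<..<r}"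
      by (metis (mono_tags, lifting) eventually_mono)
    then have "emeasure lborel {l<..<r} = 0"
      by (subst (asm) AE_iff_measurable[of "{l<..<r}"]) auto
    with lr show False by simp
  qed
  then show ?thesis by (simp add: emeasure_eq_measure zero_less_measure_iff)
qed

lemma prob_box_pos:
  assumes n: "n \<ge> 1" and lr: "\<And>i. i \<in> {1..n} \<Longrightarrow> l i < r i"
  shows "prob (\<Inter>i\<in>{1..n}. Z i -` {l i<..<r i} \<inter> space M) > 0"
proof -
  have "prob (\<Inter>i\<in>{1..n}. Z i -` {l i<..<r i} \<inter> space M) = (\<Prod>i\<in>{1..n}. prob (Z i -` {l i<..<r i} \<inter> space M))"
    using n by (intro indep_varsD[OF ind]) auto
  also have "\<dots> > 0" using lr by (intro prod_pos prob_Ioo_pos) auto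
  finally show ?thesis .
qed

lemma arm[measurable]: "(\<lambda>\<omega>. ar_proc a Z i \<omega>) \<in> borel_measurable M"
proof (induct i)
  case 0 then show ?case by simp
next
  case (Suc i)
  have [measurable]: "Z (Suc i) \<in> borel_measurable M" by (rule Zm) simp
  show ?case using Suc by simp
qed

lemma main_bound:
  fixes c s :: real and q :: "nat \<Rightarrow> real" and E :: "'a set"
  assumes c2: "c^2 = 1" and a: "a > 1" and e: "\<eta> > 0" and n: "n \<ge> 2" and s: "s > 0"
    and q0: "q 0 = 0" and qS: "\<And>j. q (Suc j) = psi c s (q j)"
    and qlt: "\<And>l. l \<in> {1..n} \<Longrightarrow> q l < 1/(2* s2)"
    and Em: "E \<in> sets M"
    and E1: "\<And>\<omega>. \<omega> \<in> E \<Longrightarrow> 0 \<le> Tf a c \<eta> n (\<lambda>j. Z j \<omega>)"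
    and E2: "\<And>\<omega>. \<omega> \<in> space M \<Longrightarrow> 0 < Tf a c \<eta> n (\<lambda>j. Z j \<omega>) \<Longrightarrow> \<omega> \<in> E"
  shows "1 / (2 * real n) * (\<Sum>l=1..n-1. ln (1 - 2 * s2 * q l)) \<le> - (1 / real n) * ln (prob E)"
proof -
  define B where "B = (\<Prod>l\<in>{1..<n}. 1/sqrt(1-2* s2*q l))"
  have qpos: "1 - 2* s2*q l > 0" if "l \<in> {1..<n}" for l
    using qlt[of l] that s2 by (auto simp: field_simps)
  have "emeasure M E = (\<integral>\<^sup>+\<omega>. indicator E \<omega> \<partial>M)"
    using Em by simp
  also have "\<dots> \<le> (\<integral>\<^sup>+\<omega>. ennreal (exp (Sv a c \<eta> s (\<lambda>j. Z j \<omega>) n + q 0 * (Uv a (\<lambda>j. Z j \<omega>) n)^2)) \<partial>M)"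
  proof (intro nn_integral_mono)
    fix \<omega> show "indicator E \<omega> \<le> ennreal (exp (Sv a c \<eta> s (\<lambda>j. Z j \<omega>) n + q 0 * (Uv a (\<lambda>j. Z j \<omega>) n)^2))"
    proof (cases "\<omega> \<in> E")
      case True
      then have "0 \<le> Sv a c \<eta> s (\<lambda>j. Z j \<omega>) n" using E1 s by (simp add: Sv_Tf)
      then have "1 \<le> exp (Sv a c \<eta> s (\<lambda>j. Z j \<omega>) n + q 0 * (Uv a (\<lambda>j. Z j \<omega>) n)^2)" using q0 by simp
      then show ?thesis using True by (simp add: ennreal_ge_1 ennreal_1[symmetric] del: ennreal_1)
    qed simp
  qed
  also have "\<dots> = G c s n (q 0)" by (simp add: G_def)
  also have "\<dots> = (\<Prod>l\<in>{0..<n}. ennreal (1/sqrt(1-2* s2*q l)))"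
  proof -
    have "\<forall>l\<in>{0..<0+n}. q l < 1/(2* s2)"
    proof
      fix l assume "l \<in> {0..<0+n}"
      then show "q l < 1/(2* s2)" using qlt[of l] q0 s2 by (cases "l = 0") auto
    qed
    from Gprod[where q=q and j=0 and k=n, OF c2 qS this] show ?thesis by simp
  qed
  also have "\<dots> = (\<Prod>l\<in>{1..<n}. ennreal (1/sqrt(1-2* s2*q l)))"
    using n q0 by (subst prod.atLeast_Suc_lessThan) auto
  also have "\<dots> = ennreal B" unfolding B_def
    using qpos by (subst prod_ennreal) (auto, meson less_imp_le)
  finally have "ennreal (prob E) \<le> ennreal B" by (simp add: emeasure_eq_measure)
  moreover have Bpos: "B > 0" unfolding B_def using qpos by (intro prod_pos) auto
  ultimately have PB: "prob E \<le> B" by simp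
  define K where "K = a + \<eta>"
  define l where "l j = (if c^(j+1) = 1 then K * Mb a K (j-1) else - (K * Mb a K (j-1) + 1))" for j
  have "prob (\<Inter>i\<in>{1..n}. Z i -` {l i<..<l i + 1} \<inter> space M) > 0"
    using n by (intro prob_box_pos) auto
  moreover have "(\<Inter>i\<in>{1..n}. Z i -` {l i<..<l i + 1} \<inter> space M) \<subseteq> E"
  proof
    fix \<omega> assume w: "\<omega> \<in> (\<Inter>i\<in>{1..n}. Z i -` {l i<..<l i + 1} \<inter> space M)"
    then have sp: "\<omega> \<in> space M" using n by auto
    have "0 < Tf a c \<eta> n (\<lambda>j. Z j \<omega>)"
    proof (rule box_T[OF c2 a e n])
      fix j assume j: "j \<in> {1..n}"
      then have zj: "l j < Z j \<omega>" "Z j \<omega> < l j + 1" using w by auto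
      show "(a+\<eta>)*Mb a (a+\<eta>) (j-1) < c^(j+1) * Z j \<omega> \<and> c^(j+1) * Z j \<omega> < (a+\<eta>)*Mb a (a+\<eta>) (j-1) + 1"
        using cpow[OF c2, of "j+1"] zj unfolding l_def K_def by (auto split: if_splits)
    qed
    then show "\<omega> \<in> E" using E2 sp by blast
  qed
  ultimately have Ppos: "prob E > 0" using Em by (meson finite_measure_mono less_le_trans)
  have "ln (prob E) \<le> ln B" using PB Ppos by simp
  also have "ln B = (\<Sum>l\<in>{1..<n}. ln (1/sqrt(1-2* s2*q l)))"
    unfolding B_def using qpos by (subst ln_prod) (auto, metis atLeastLessThan_iff diff_gt_0_iff_gt less_irrefl Suc_le_eq le_refl)
  also have "\<dots> = (\<Sum>l\<in>{1..<n}. - ln (1-2* s2*q l) / 2)"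
  proof (intro sum.cong refl)
    fix l assume "l \<in> {1..<n}"
    then have p: "1-2* s2*q l > 0" by (rule qpos)
    then show "ln (1/sqrt(1-2* s2*q l)) = - ln (1-2* s2*q l) / 2" by (simp add: ln_div ln_sqrt)
  qed
  also have "\<dots> = - (\<Sum>l=1..n-1. ln (1 - 2 * s2 * q l)) / 2"
  proof -
    have "{1..<n} = {1..n-1}" using n by auto
    then show ?thesis by (simp add: sum_negf sum_divide_distrib)
  qed
  finally have "ln (prob E) \<le> - (\<Sum>l=1..n-1. ln (1 - 2 * s2 * q l)) / 2" .
  then show ?thesis using n by (simp add: field_simps)
qed
end


theorem theorem1:
  fixes M :: "'a measure" and Z :: "nat \<Rightarrow> 'a \<Rightarrow> real"
    and s2 a \<eta> :: real and n :: nat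
  assumes "prob_space M"
    and "s2 > 0" and "a > 1"
    and "prob_space.indep_vars M (\<lambda>_. borel) Z {1..}"
    and "\<And>i. i \<ge> 1 \<Longrightarrow> distributed M lborel (Z i) (normal_density 0 (sqrt s2))"
    and "\<eta> > 0" and "n \<ge> 2"
  shows "ereal (P_plus M Z n a \<eta>) \<ge>
           (SUP s\<in>S_plus a s2 \<eta> n.
              ereal (1 / (2 * real n) * (\<Sum>l=1..n-1. ln (1 - 2 * s2 * alpha_seq a s2 \<eta> s l))))
       \<and> ereal (P_minus M Z n a \<eta>) \<ge>
           (SUP s\<in>S_minus a s2 \<eta> n.
              ereal (1 / (2 * real n) * (\<Sum>l=1..n-1. ln (1 - 2 * s2 * beta_seq a s2 \<eta> s l))))"
proof -
  interpret arset M Z s2 a \<eta>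
    using assms by (simp add: arset_def arset_axioms_def)
  have a: "a > 1" and e: "\<eta> > 0" and n: "n \<ge> 2" using assms by auto
  have arU: "(\<lambda>i. ar_proc a Z i \<omega>) = Uv a (\<lambda>j. Z j \<omega>)" for \<omega>
    by (rule ext) (simp add: ar_Uv)
  define Ep where "Ep = {\<omega> \<in> space M. a_ML (\<lambda>i. ar_proc a Z i \<omega>) n - a > \<eta>}"
  define Em where "Em = {\<omega> \<in> space M. a_ML (\<lambda>i. ar_proc a Z i \<omega>) n - a < - \<eta>}"
  have Epm: "Ep \<in> sets M" unfolding Ep_def a_ML_def by measurable
  have Emm: "Em \<in> sets M" unfolding Em_def a_ML_def by measurable
  have P1: "ereal (1 / (2 * real n) * (\<Sum>l=1..n-1. ln (1 - 2 * s2 * alpha_seq a s2 \<eta> s l))) \<le> ereal (P_plus M Z n a \<eta>)"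
    if s: "s \<in> S_plus a s2 \<eta> n" for s
  proof -
    have "1 / (2 * real n) * (\<Sum>l=1..n-1. ln (1 - 2 * s2 * alpha_seq a s2 \<eta> s l)) \<le> - (1 / real n) * ln (prob Ep)"
    proof (rule main_bound[where c=1 and s=s and q="alpha_seq a s2 \<eta> s" and E=Ep])
      show "alpha_seq a s2 \<eta> s (Suc j) = psi 1 s (alpha_seq a s2 \<eta> s j)" for j
        by (cases j) (simp_all add: psi_def)
      show "\<And>\<omega>. \<omega> \<in> Ep \<Longrightarrow> 0 \<le> Tf a 1 \<eta> n (\<lambda>j. Z j \<omega>)"
        unfolding Ep_def arU using ev_plus_T[OF a e] by blast
      show "\<And>\<omega>. \<omega> \<in> space M \<Longrightarrow> 0 < Tf a 1 \<eta> n (\<lambda>j. Z j \<omega>) \<Longrightarrow> \<omega> \<in> Ep"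
        unfolding Ep_def arU using T_ev_plus by blast
    qed (use s a e n Epm in \<open>auto simp: S_plus_def\<close>)
    then show ?thesis by (simp add: P_plus_def Ep_def)
  qed
  have P2: "ereal (1 / (2 * real n) * (\<Sum>l=1..n-1. ln (1 - 2 * s2 * beta_seq a s2 \<eta> s l))) \<le> ereal (P_minus M Z n a \<eta>)"
    if s: "s \<in> S_minus a s2 \<eta> n" for s
  proof -
    have "1 / (2 * real n) * (\<Sum>l=1..n-1. ln (1 - 2 * s2 * beta_seq a s2 \<eta> s l)) \<le> - (1 / real n) * ln (prob Em)"
    proof (rule main_bound[where c="-1" and s=s and q="beta_seq a s2 \<eta> s" and E=Em])
      show "beta_seq a s2 \<eta> s (Suc j) = psi (-1) s (beta_seq a s2 \<eta> s j)" for j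
        by (cases j) (simp_all add: psi_def)
      show "\<And>\<omega>. \<omega> \<in> Em \<Longrightarrow> 0 \<le> Tf a (-1) \<eta> n (\<lambda>j. Z j \<omega>)"
        unfolding Em_def arU using ev_minus_T[OF a e] by blast
      show "\<And>\<omega>. \<omega> \<in> space M \<Longrightarrow> 0 < Tf a (-1) \<eta> n (\<lambda>j. Z j \<omega>) \<Longrightarrow> \<omega> \<in> Em"
        unfolding Em_def arU using T_ev_minus by blast
    qed (use s a e n Emm in \<open>auto simp: S_minus_def\<close>)
    then show ?thesis by (simp add: P_minus_def Em_def)
  qed
  show ?thesis
    by (intro conjI SUP_least P1 P2)
qed

end
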